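(* Let $X$ be a real Banach space and $C$ a weakly compact subset of $X$. Then the triplet $(X,C,\mathcal{CB}(X))$ has weak-$\mathscr{F}_{cmc}$-SACP, where $\mathcal{CB}(X)$ is the family of all nonempty closed bounded subsets of $X$ and $\mathscr{F}_{cmc}$ is the class of all convex, monotone, coercive functions $f:\ell_\infty^+(F)\to[0,\infty)$, $F\in\mathcal{CB}(X)$.
   Context: For a nonempty closed bounded set $F\subseteq X$, $\ell_\infty^+(F)$ is the set of bounded functions $\varphi:F\to[0,\infty)$ with the coordinatewise order and sup norm. $f$ is monotone if $\varphi_1\le\varphi_2$ implies $f(\varphi_1)\le f(\varphi_2)$, coercive if $f(\varphi)\to\infty$ as $\|\varphi\|_\infty\to\infty$. $r_f(x,F)=f((\|x-a\|)_{a\in F})$, $\mathrm{rad}_V^f(F)=\inf_{v\in V}r_f(v,F)$. $(X,V,\mathfrak{F})$ has weak-$\mathscr{F}$-SACP if for every $F\in\mathfrak{F}$, every $f\in\mathscr{F}$ on $\ell_\infty^+(F)$ and every sequence $(v_n)\subseteq V$ with $r_f(v_n,F)\to\mathrm{rad}_V^f(F)$, $(v_n)$ has a weakly convergent subsequence. *)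

theory Defs
  imports "HOL-Analysis.Analysis"
begin

definition weak_topology :: "'a::real_normed_vector topology" where
  "weak_topology = topology_generated_by
     {{x. l x \<in> U} | (l :: 'a \<Rightarrow> real) U. bounded_linear l \<and> open U}"

definition weakly_compact :: "'a::real_normed_vector set \<Rightarrow> bool" where
  "weakly_compact C \<longleftrightarrow> compactin weak_topology C"

definition weakly_tendsto :: "(nat \<Rightarrow> 'a::real_normed_vector) \<Rightarrow> 'a \<Rightarrow> bool" where
  "weakly_tendsto v x \<longleftrightarrow>
     (\<forall>l :: 'a \<Rightarrow> real. bounded_linear l \<longrightarrow> (\<lambda>n. l (v n)) \<longlonglongrightarrow> l x)"

definition CB :: "'a::real_normed_vector set set" where
  "CB = {F. F \<noteq> {} \<and> closed F \<and> bounded F}"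

text \<open>ell_infty^+(F), elements represented as functions vanishing outside F.\<close>
definition linf_plus :: "'a set \<Rightarrow> ('a \<Rightarrow> real) set" where
  "linf_plus F = {\<phi>. (\<forall>a\<in>F. 0 \<le> \<phi> a) \<and> bdd_above (\<phi> ` F) \<and> (\<forall>a. a \<notin> F \<longrightarrow> \<phi> a = 0)}"

definition sup_norm :: "'a set \<Rightarrow> ('a \<Rightarrow> real) \<Rightarrow> real" where
  "sup_norm F \<phi> = (SUP a\<in>F. \<bar>\<phi> a\<bar>)"

definition F_cmc :: "'a set \<Rightarrow> (('a \<Rightarrow> real) \<Rightarrow> real) set" where
  "F_cmc F = {f.
     (\<forall>\<phi>\<in>linf_plus F. 0 \<le> f \<phi>) \<and>
     (\<forall>\<phi>1\<in>linf_plus F. \<forall>\<phi>2\<in>linf_plus F. \<forall>t::real. 0 \<le> t \<and> t \<le> 1 \<longrightarrow>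
        f (\<lambda>a. t * \<phi>1 a + (1 - t) * \<phi>2 a) \<le> t * f \<phi>1 + (1 - t) * f \<phi>2) \<and>
     (\<forall>\<phi>1\<in>linf_plus F. \<forall>\<phi>2\<in>linf_plus F. (\<forall>a\<in>F. \<phi>1 a \<le> \<phi>2 a) \<longrightarrow> f \<phi>1 \<le> f \<phi>2) \<and>
     (\<forall>M. \<exists>R. \<forall>\<phi>\<in>linf_plus F. sup_norm F \<phi> \<ge> R \<longrightarrow> f \<phi> \<ge> M)}"

definition r_f :: "(('a \<Rightarrow> real) \<Rightarrow> real) \<Rightarrow> 'a::real_normed_vector \<Rightarrow> 'a set \<Rightarrow> real" where
  "r_f f x F = f (\<lambda>a. if a \<in> F then norm (x - a) else 0)"

definition rad :: "'a::real_normed_vector set \<Rightarrow> (('a \<Rightarrow> real) \<Rightarrow> real) \<Rightarrow> 'a set \<Rightarrow> real" where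
  "rad V f F = (INF v\<in>V. r_f f v F)"

text \<open>weak-\<F>-SACP for the triplet (X, V, \<FF>), with X the ambient type and
  \<Phi> F the class of functions on ell_infty^+(F).\<close>
definition weak_SACP :: "'a::real_normed_vector set \<Rightarrow> 'a set set \<Rightarrow> ('a set \<Rightarrow> (('a \<Rightarrow> real) \<Rightarrow> real) set) \<Rightarrow> bool" where
  "weak_SACP V FF \<Phi> \<longleftrightarrow>
     (\<forall>F\<in>FF. \<forall>f\<in>\<Phi> F. \<forall>v :: nat \<Rightarrow> 'a. (\<forall>n. v n \<in> V) \<longrightarrow>
        (\<lambda>n. r_f f (v n) F) \<longlonglongrightarrow> rad V f F \<longrightarrow>
        (\<exists>s x. strict_mono s \<and> weakly_tendsto (v \<circ> s) x))"

end

theory Submission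
  imports Defs "HOL-Library.Diagonal_Subsequence"
begin

definition goodHB :: "('a::real_normed_vector \<times> real) set \<Rightarrow> ('a \<times> real) set \<Rightarrow> bool" where
 "goodHB H0 H \<longleftrightarrow> H0 \<subseteq> H \<and> (\<forall>x a b. (x,a)\<in>H \<longrightarrow> (x,b)\<in>H \<longrightarrow> a=b)
   \<and> (\<forall>x y a b. (x,a)\<in>H \<longrightarrow> (y,b)\<in>H \<longrightarrow> (x+y,a+b)\<in>H)
   \<and> (\<forall>x a c. (x,a)\<in>H \<longrightarrow> (c *\<^sub>R x, c*a)\<in>H)
   \<and> (\<forall>x a. (x,a)\<in>H \<longrightarrow> a \<le> norm x)"

lemma goodHB_D:
  assumes "goodHB H0 H"
  shows "H0 \<subseteq> H" "\<And>x a b. (x,a)\<in>H \<Longrightarrow> (x,b)\<in>H \<Longrightarrow> a=b"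
   "\<And>x y a b. (x,a)\<in>H \<Longrightarrow> (y,b)\<in>H \<Longrightarrow> (x+y,a+b)\<in>H"
   "\<And>x a c. (x,a)\<in>H \<Longrightarrow> (c *\<^sub>R x, c*a)\<in>H"
   "\<And>x a. (x,a)\<in>H \<Longrightarrow> a \<le> norm x"
  using assms unfolding goodHB_def by blast+

lemma HB_step:
  fixes M :: "('a::real_normed_vector \<times> real) set"
  assumes g: "goodHB H0 M" and ne: "M \<noteq> {}" and z: "\<forall>a. (z,a) \<notin> M"
  shows "\<exists>M'. goodHB H0 M' \<and> M \<subseteq> M' \<and> M' \<noteq> M"
proof -
  have fn: "\<And>x a b. (x,a)\<in>M \<Longrightarrow> (x,b)\<in>M \<Longrightarrow> a=b"
   and add: "\<And>x y a b. (x,a)\<in>M \<Longrightarrow> (y,b)\<in>M \<Longrightarrow> (x+y,a+b)\<in>M"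
   and sc: "\<And>x a c. (x,a)\<in>M \<Longrightarrow> (c *\<^sub>R x, c*a)\<in>M"
   and bd: "\<And>x a. (x,a)\<in>M \<Longrightarrow> a \<le> norm x" and H0: "H0 \<subseteq> M"
    using goodHB_D[OF g] by blast+
  obtain x0 a0 where "(x0,a0) \<in> M" using ne by auto
  from sc[OF this, of 0] have zero: "(0,0) \<in> M" by simp
  define S where "S = {b - norm (s - z) | s b. (s,b)\<in>M}"
  define c where "c = Sup S"
  have ub: "b - norm (s - z) \<le> norm (s' + z) - b'" if "(s,b)\<in>M" "(s',b')\<in>M" for s b s' b'
  proof -
    have "b + b' \<le> norm (s + s')" using bd[OF add[OF that]] .
    also have "s + s' = (s - z) + (s' + z)" by simp
    also have "norm \<dots> \<le> norm (s - z) + norm (s' + z)" by (rule norm_triangle_ineq)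
    finally show ?thesis by simp
  qed
  have Sne: "S \<noteq> {}" using zero unfolding S_def by blast
  have Sbdd: "bdd_above S" unfolding S_def bdd_above_def using ub zero by blast
  have c_ge: "b - norm (s - z) \<le> c" if "(s,b)\<in>M" for s b
    unfolding c_def by (rule cSup_upper[OF _ Sbdd]) (use that S_def in blast)
  have c_le: "c \<le> norm (s' + z) - b'" if "(s',b')\<in>M" for s' b'
    unfolding c_def by (rule cSup_least[OF Sne]) (use that ub S_def in blast)
  define M' where "M' = {(t + a *\<^sub>R z, b + a * c) | t b a. (t,b)\<in>M}"
  have inM': "(t,b)\<in>M \<Longrightarrow> (t + a *\<^sub>R z, b + a * c) \<in> M'" for t b a
    unfolding M'_def by blast
  have sub: "M \<subseteq> M'"
  proof
    fix p assume "p \<in> M" then obtain t b where "p = (t,b)" "(t,b)\<in>M" by (cases p) auto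
    then show "p \<in> M'" using inM'[of t b 0] by simp
  qed
  have zM': "(z, c) \<in> M'" using inM'[OF zero, of 1] by simp
  have neq: "M' \<noteq> M" using zM' z by blast
  have uniq: "a = a' \<and> t = t'" if "(t,b)\<in>M" "(t',b')\<in>M" "t + a *\<^sub>R z = t' + a' *\<^sub>R z" for t b t' b' a a'
  proof (cases "a = a'")
    case True then show ?thesis using that by simp
  next
    case False
    have "(t + (-1) *\<^sub>R t', b + (-1) * b') \<in> M" using add[OF that(1) sc[OF that(2)]] .
    from sc[OF this, of "1/(a'-a)"]
    have "((1/(a'-a)) *\<^sub>R (t - t'), (1/(a'-a)) * (b - b')) \<in> M" by simp
    moreover have "(1/(a'-a)) *\<^sub>R (t - t') = z"
    proof -
      have "t - t' = (a' - a) *\<^sub>R z" using that(3) by (simp add: algebra_simps)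
      then show ?thesis using False by simp
    qed
    ultimately show ?thesis using z by metis
  qed
  have "goodHB H0 M'"
    unfolding goodHB_def
  proof (intro conjI allI impI)
    show "H0 \<subseteq> M'" using H0 sub by blast
  next
    fix x a b assume "(x,a)\<in>M'" "(x,b)\<in>M'"
    then obtain t1 b1 a1 t2 b2 a2 where 1: "(t1,b1)\<in>M" "x = t1 + a1 *\<^sub>R z" "a = b1 + a1*c"
      and 2: "(t2,b2)\<in>M" "x = t2 + a2 *\<^sub>R z" "b = b2 + a2*c" unfolding M'_def by blast
    with uniq[OF 1(1) 2(1), of a1 a2] have "a1 = a2" "t1 = t2" by auto
    then show "a = b" using 1 2 fn by auto
  next
    fix x y a b assume "(x,a)\<in>M'" "(y,b)\<in>M'"
    then obtain t1 b1 a1 t2 b2 a2 where 1: "(t1,b1)\<in>M" "x = t1 + a1 *\<^sub>R z" "a = b1 + a1*c"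
      and 2: "(t2,b2)\<in>M" "y = t2 + a2 *\<^sub>R z" "b = b2 + a2*c" unfolding M'_def by blast
    have "(t1 + t2 + (a1+a2) *\<^sub>R z, b1 + b2 + (a1+a2)*c) \<in> M'" using inM'[OF add[OF 1(1) 2(1)]] .
    then show "(x+y,a+b)\<in>M'" using 1 2 by (simp add: algebra_simps)
  next
    fix x a d assume "(x,a)\<in>M'"
    then obtain t1 b1 a1 where 1: "(t1,b1)\<in>M" "x = t1 + a1 *\<^sub>R z" "a = b1 + a1*c"
      unfolding M'_def by blast
    have "(d *\<^sub>R t1 + (d*a1) *\<^sub>R z, d*b1 + (d*a1)*c) \<in> M'" using inM'[OF sc[OF 1(1)]] .
    then show "(d *\<^sub>R x, d*a)\<in>M'" using 1 by (simp add: algebra_simps)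
  next
    fix x a assume "(x,a)\<in>M'"
    then obtain t b r where 1: "(t,b)\<in>M" "x = t + r *\<^sub>R z" "a = b + r*c"
      unfolding M'_def by blast
    consider "r = 0" | "r > 0" | "r < 0" by linarith
    then show "a \<le> norm x"
    proof cases
      case 1 then show ?thesis using bd \<open>(t,b)\<in>M\<close> \<open>x = _\<close> \<open>a = _\<close> by simp
    next
      case 2
      have cl: "c \<le> norm ((1/r) *\<^sub>R t + z) - (1/r) * b" using c_le[OF sc[OF 1(1), of "1/r"]] .
      have "r * c \<le> r * (norm ((1/r) *\<^sub>R t + z) - (1/r) * b)" using mult_left_mono[OF cl, of r] 2 by simp
      then have A: "r * c \<le> r * norm ((1/r) *\<^sub>R t + z) - b" using 2 by (simp add: right_diff_distrib)
      have "norm x = norm (r *\<^sub>R ((1/r) *\<^sub>R t + z))" using 1 2 by (simp add: algebra_simps)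
      also have "\<dots> = r * norm ((1/r) *\<^sub>R t + z)" using 2 by simp
      finally show ?thesis using A 1 by (simp add: algebra_simps)
    next
      case 3
      define q where "q = - r"
      have q: "q > 0" using 3 q_def by simp
      have cg: "(1/q) * b - norm ((1/q) *\<^sub>R t - z) \<le> c" using c_ge[OF sc[OF 1(1), of "1/q"]] .
      have "q * ((1/q) * b - norm ((1/q) *\<^sub>R t - z)) \<le> q * c" using mult_left_mono[OF cg, of q] q by simp
      then have A: "b - q * norm ((1/q) *\<^sub>R t - z) \<le> q * c" using q by (simp add: right_diff_distrib)
      have "norm x = norm (q *\<^sub>R ((1/q) *\<^sub>R t - z))" using 1 q q_def by (simp add: algebra_simps)
      also have "\<dots> = q * norm ((1/q) *\<^sub>R t - z)" using q by simp
      finally show ?thesis using A 1 q_def by (simp add: algebra_simps)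
    qed
  qed
  then show ?thesis using sub neq by blast
qed

lemma HB:
  fixes H0 :: "('a::real_normed_vector \<times> real) set"
  assumes ne: "H0 \<noteq> {}" and g0: "goodHB H0 H0"
  shows "\<exists>L. bounded_linear L \<and> (\<forall>x a. (x,a)\<in>H0 \<longrightarrow> L x = a) \<and> (\<forall>x. \<bar>L x\<bar> \<le> norm x)"
proof -
  define A where "A = {H. goodHB H0 H}"
  have "\<exists>U\<in>A. \<forall>X\<in>C. X \<subseteq> U" if C: "C \<in> chains A" for C
  proof (cases "C = {}")
    case True then show ?thesis using g0 A_def by auto
  next
    case False
    have CA: "C \<subseteq> A" and ch: "\<And>X Y. X\<in>C \<Longrightarrow> Y\<in>C \<Longrightarrow> X \<subseteq> Y \<or> Y \<subseteq> X"
      using C unfolding chains_def chain_subset_def by auto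
    have gX: "goodHB H0 X" if "X \<in> C" for X using that CA A_def by blast
    have two: "\<exists>X\<in>C. p \<in> X \<and> q \<in> X" if "p \<in> \<Union>C" "q \<in> \<Union>C" for p q
      using that ch by blast
    have "goodHB H0 (\<Union>C)"
      unfolding goodHB_def
    proof (intro conjI allI impI)
      obtain X where "X \<in> C" using False by blast
      then show "H0 \<subseteq> \<Union>C" using goodHB_D(1)[OF gX] by blast
    next
      fix x a b assume "(x,a)\<in>\<Union>C" "(x,b)\<in>\<Union>C"
      then obtain X where "X\<in>C" "(x,a)\<in>X" "(x,b)\<in>X" using two by blast
      then show "a = b" using goodHB_D(2)[OF gX] by blast
    next
      fix x y a b assume "(x,a)\<in>\<Union>C" "(y,b)\<in>\<Union>C"
      then obtain X where "X\<in>C" "(x,a)\<in>X" "(y,b)\<in>X" using two by blast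
      then show "(x+y,a+b)\<in>\<Union>C" using goodHB_D(3)[OF gX] by blast
    next
      fix x a c assume "(x,a)\<in>\<Union>C"
      then obtain X where "X\<in>C" "(x,a)\<in>X" by blast
      then show "(c *\<^sub>R x, c*a)\<in>\<Union>C" using goodHB_D(4)[OF gX] by blast
    next
      fix x a assume "(x,a)\<in>\<Union>C"
      then obtain X where "X\<in>C" "(x,a)\<in>X" by blast
      then show "a \<le> norm x" using goodHB_D(5)[OF gX] by blast
    qed
    then show ?thesis using A_def by blast
  qed
  then obtain M where M: "M \<in> A" and max: "\<forall>X\<in>A. M \<subseteq> X \<longrightarrow> X = M"
    using Zorn_Lemma2[of A] by blast
  have gM: "goodHB H0 M" using M A_def by simp
  have neM: "M \<noteq> {}" using goodHB_D(1)[OF gM] ne by blast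
  have tot: "\<forall>x. \<exists>a. (x,a) \<in> M"
  proof (rule ccontr)
    assume "\<not> ?thesis"
    then obtain z where "\<forall>a. (z,a)\<notin>M" by blast
    from HB_step[OF gM neM this] obtain M' where "goodHB H0 M'" "M \<subseteq> M'" "M' \<noteq> M" by blast
    then show False using max A_def by blast
  qed
  define L where "L x = (SOME a. (x,a)\<in>M)" for x
  have LM: "(x, L x) \<in> M" for x unfolding L_def using tot by (metis someI_ex)
  have fn: "\<And>x a b. (x,a)\<in>M \<Longrightarrow> (x,b)\<in>M \<Longrightarrow> a=b"
   and add: "\<And>x y a b. (x,a)\<in>M \<Longrightarrow> (y,b)\<in>M \<Longrightarrow> (x+y,a+b)\<in>M"
   and sc: "\<And>x a c. (x,a)\<in>M \<Longrightarrow> (c *\<^sub>R x, c*a)\<in>M"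
   and bd: "\<And>x a. (x,a)\<in>M \<Longrightarrow> a \<le> norm x" and H0: "H0 \<subseteq> M"
    using goodHB_D[OF gM] by blast+
  have Ladd: "L (x+y) = L x + L y" for x y using fn[OF LM add[OF LM LM]] .
  have Lsc: "L (c *\<^sub>R x) = c * L x" for c x using fn[OF LM sc[OF LM]] .
  have Lbd: "\<bar>L x\<bar> \<le> norm x" for x
  proof -
    have "L x \<le> norm x" using bd[OF LM] .
    moreover have "L ((-1) *\<^sub>R x) \<le> norm x" using bd[OF LM, of "(-1) *\<^sub>R x"] by simp
    ultimately show ?thesis using Lsc[of "-1" x] by simp
  qed
  have "bounded_linear L"
    by (rule bounded_linear_intro[where K=1]) (use Ladd Lsc Lbd in auto)
  moreover have "\<forall>x a. (x,a)\<in>H0 \<longrightarrow> L x = a" using H0 fn LM by blast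
  ultimately show ?thesis using Lbd by blast
qed

lemma norming_functional:
  fixes q :: "'a::real_normed_vector"
  shows "\<exists>g. bounded_linear g \<and> g q = norm q \<and> (\<forall>x. \<bar>g x\<bar> \<le> norm x)"
proof -
  define H0 where "H0 = {(c *\<^sub>R q, c * norm q) | c. True}"
  have "goodHB H0 H0"
    unfolding goodHB_def
  proof (intro conjI allI impI)
    fix x a b assume "(x,a)\<in>H0" "(x,b)\<in>H0"
    then obtain c c' where "x = c *\<^sub>R q" "a = c * norm q" "x = c' *\<^sub>R q" "b = c' * norm q"
      unfolding H0_def by blast
    then show "a = b" by (cases "q = 0") auto
  next
    fix x y a b assume "(x,a)\<in>H0" "(y,b)\<in>H0"
    then obtain c c' where "x = c *\<^sub>R q" "a = c * norm q" "y = c' *\<^sub>R q" "b = c' * norm q"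
      unfolding H0_def by blast
    then show "(x+y,a+b)\<in>H0" unfolding H0_def
      by (auto intro!: exI[of _ "c+c'"] simp: algebra_simps)
  next
    fix x a d assume "(x,a)\<in>H0"
    then obtain c where "x = c *\<^sub>R q" "a = c * norm q" unfolding H0_def by blast
    then show "(d *\<^sub>R x, d*a)\<in>H0" unfolding H0_def
      by (auto intro!: exI[of _ "d*c"])
  next
    fix x a assume "(x,a)\<in>H0"
    then obtain c where "x = c *\<^sub>R q" "a = c * norm q" unfolding H0_def by blast
    then show "a \<le> norm x" by (simp add: mult_right_mono)
  qed auto
  moreover have "H0 \<noteq> {}" unfolding H0_def by blast
  ultimately obtain L where "bounded_linear L" "\<forall>x a. (x,a)\<in>H0 \<longrightarrow> L x = a" "\<forall>x. \<bar>L x\<bar> \<le> norm x"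
    using HB by blast
  moreover have "(q, norm q) \<in> H0" unfolding H0_def by (auto intro!: exI[of _ 1])
  ultimately show ?thesis by blast
qed

lemma separating_functional:
  fixes z :: "'a::real_normed_vector"
  assumes Y: "subspace Y" "closed Y" and z: "z \<notin> Y"
  shows "\<exists>g::'a\<Rightarrow>real. bounded_linear g \<and> (\<forall>y\<in>Y. g y = 0) \<and> g z \<noteq> 0"
proof -
  have "0 \<in> Y" using Y subspace_0 by blast
  then have Yne: "Y \<noteq> {}" by blast
  define d where "d = infdist z Y"
  have dpos: "d > 0" using in_closed_iff_infdist_zero[OF Y(2) Yne, of z] z infdist_nonneg[of z Y]
    unfolding d_def by linarith
  define H0 where "H0 = {(y + c *\<^sub>R z, c * d) | y c. y \<in> Y}"
  have uniq: "c = c'" if "y \<in> Y" "y' \<in> Y" "y + c *\<^sub>R z = y' + c' *\<^sub>R z" for y y' c c'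
  proof (rule ccontr)
    assume ne: "c \<noteq> c'"
    have h: "(c' - c) *\<^sub>R z = y - y'" using that(3) by (simp add: algebra_simps)
    have "z = (1/(c'-c)) *\<^sub>R ((c' - c) *\<^sub>R z)" using ne by simp
    then have "z = (1/(c'-c)) *\<^sub>R (y - y')" using h by simp
    moreover have "(1/(c'-c)) *\<^sub>R (y - y') \<in> Y"
      using Y(1) that(1,2) by (simp add: subspace_diff subspace_scale)
    ultimately show False using z by simp
  qed
  have "goodHB H0 H0"
    unfolding goodHB_def
  proof (intro conjI allI impI)
    fix x a b assume "(x,a)\<in>H0" "(x,b)\<in>H0"
    then obtain y c y' c' where "y\<in>Y" "x = y + c *\<^sub>R z" "a = c * d" "y'\<in>Y" "x = y' + c' *\<^sub>R z" "b = c' * d"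
      unfolding H0_def by blast
    then show "a = b" using uniq by metis
  next
    fix x x' a b assume "(x,a)\<in>H0" "(x',b)\<in>H0"
    then obtain y c y' c' where "y\<in>Y" "x = y + c *\<^sub>R z" "a = c * d" "y'\<in>Y" "x' = y' + c' *\<^sub>R z" "b = c' * d"
      unfolding H0_def by blast
    then show "(x+x',a+b)\<in>H0" unfolding H0_def using Y(1)
      by (auto intro!: exI[of _ "y+y'"] exI[of _ "c+c'"] simp: algebra_simps subspace_add)
  next
    fix x a e assume "(x,a)\<in>H0"
    then obtain y c where "y\<in>Y" "x = y + c *\<^sub>R z" "a = c * d" unfolding H0_def by blast
    then show "(e *\<^sub>R x, e*a)\<in>H0" unfolding H0_def using Y(1)
      by (auto intro!: exI[of _ "e *\<^sub>R y"] exI[of _ "e*c"] simp: algebra_simps subspace_scale)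
  next
    fix x a assume "(x,a)\<in>H0"
    then obtain y c where y: "y\<in>Y" "x = y + c *\<^sub>R z" "a = c * d" unfolding H0_def by blast
    show "a \<le> norm x"
    proof (cases "c > 0")
      case False
      then have "c * d \<le> 0" using dpos by (simp add: mult_nonpos_nonneg)
      then show ?thesis using y norm_ge_zero[of x] by linarith
    next
      case True
      have "(-(1/c)) *\<^sub>R y \<in> Y" using Y(1) y(1) by (rule subspace_scale)
      then have "d \<le> dist z ((-(1/c)) *\<^sub>R y)" unfolding d_def by (rule infdist_le)
      also have "\<dots> = norm (z + (1/c) *\<^sub>R y)" by (simp add: dist_norm)
      finally have "c * d \<le> c * norm (z + (1/c) *\<^sub>R y)" using True by simp
      also have "\<dots> = norm (c *\<^sub>R (z + (1/c) *\<^sub>R y))" using True by simp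
      also have "c *\<^sub>R (z + (1/c) *\<^sub>R y) = x" using True y by (simp add: algebra_simps)
      finally show ?thesis using y by simp
    qed
  qed auto
  moreover have "H0 \<noteq> {}" using \<open>0\<in>Y\<close> unfolding H0_def by blast
  ultimately obtain L where L: "bounded_linear L" "\<forall>x a. (x,a)\<in>H0 \<longrightarrow> L x = a"
    using HB by blast
  have "(y, 0) \<in> H0" if "y \<in> Y" for y
  proof -
    have "(y + 0 *\<^sub>R z, 0 * d) \<in> H0" unfolding H0_def using that by blast
    then show ?thesis by simp
  qed
  moreover have "(z, d) \<in> H0" unfolding H0_def using \<open>0\<in>Y\<close> by (auto intro!: exI[of _ 0] exI[of _ 1])
  ultimately have "\<forall>y\<in>Y. L y = 0" "L z = d" using L(2) by auto
  then show ?thesis using L(1) dpos by fastforce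
qed

lemma weak_open:
  fixes l :: "'a::real_normed_vector \<Rightarrow> real"
  assumes "bounded_linear l" "open U"
  shows "openin weak_topology {x. l x \<in> U}"
  unfolding weak_topology_def
  apply (rule topology_generated_by_Basis)
  apply (rule CollectI)
  apply (rule exI[of _ l])
  apply (rule exI[of _ U])
  using assms by simp

lemma wc_cluster:
  fixes C :: "'a::real_normed_vector set" and w :: "nat \<Rightarrow> 'a" and I :: "nat set"
  assumes wc: "weakly_compact C" and w: "\<And>n. w n \<in> C" and I: "infinite I"
  shows "\<exists>y\<in>C. \<forall>(l::'a\<Rightarrow>real) \<epsilon> N. bounded_linear l \<longrightarrow> \<epsilon> > 0 \<longrightarrow> (\<exists>n\<ge>N. n\<in>I \<and> \<bar>l (w n) - l y\<bar> < \<epsilon>)"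
proof (rule ccontr)
  assume nt: "\<not> ?thesis"
  have nt2: "\<forall>y\<in>C. \<not> (\<forall>(l::'a\<Rightarrow>real) \<epsilon> N. bounded_linear l \<longrightarrow> \<epsilon> > 0 \<longrightarrow> (\<exists>n\<ge>N. n\<in>I \<and> \<bar>l (w n) - l y\<bar> < \<epsilon>))"
    using nt by (simp only: bex_simps)
  have "\<forall>y\<in>C. \<exists>p::('a\<Rightarrow>real)\<times>real\<times>nat. bounded_linear (fst p) \<and> fst (snd p) > 0 \<and> (\<forall>n\<ge>snd (snd p). n\<in>I \<longrightarrow> fst (snd p) \<le> \<bar>fst p (w n) - fst p y\<bar>)"
  proof
    fix y assume "y \<in> C"
    with nt2 have "\<not> (\<forall>(l::'a\<Rightarrow>real) \<epsilon> N. bounded_linear l \<longrightarrow> \<epsilon> > 0 \<longrightarrow> (\<exists>n\<ge>N. n\<in>I \<and> \<bar>l (w n) - l y\<bar> < \<epsilon>))"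
      by (rule bspec)
    then have "\<exists>(l::'a\<Rightarrow>real) \<epsilon> N. bounded_linear l \<and> \<epsilon> > 0 \<and> \<not> (\<exists>n\<ge>N. n\<in>I \<and> \<bar>l (w n) - l y\<bar> < \<epsilon>)"
      by (simp only: not_all not_imp)
    then obtain l :: "'a\<Rightarrow>real" and \<epsilon> N where "bounded_linear l" "\<epsilon> > 0" "\<not> (\<exists>n\<ge>N. n\<in>I \<and> \<bar>l (w n) - l y\<bar> < \<epsilon>)"
      by (elim exE conjE)
    then show "\<exists>p::('a\<Rightarrow>real)\<times>real\<times>nat. bounded_linear (fst p) \<and> fst (snd p) > 0 \<and> (\<forall>n\<ge>snd (snd p). n\<in>I \<longrightarrow> fst (snd p) \<le> \<bar>fst p (w n) - fst p y\<bar>)"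
      by (intro exI[of _ "(l, \<epsilon>, N)"]) (auto simp: not_less)
  qed
  from bchoice[OF this] obtain P :: "'a \<Rightarrow> ('a\<Rightarrow>real)\<times>real\<times>nat" where HP: "\<forall>y\<in>C. bounded_linear (fst (P y)) \<and> fst (snd (P y)) > 0 \<and> (\<forall>n\<ge>snd (snd (P y)). n\<in>I \<longrightarrow> fst (snd (P y)) \<le> \<bar>fst (P y) (w n) - fst (P y) y\<bar>)"
    by blast
  define l where "l y = fst (P y)" for y
  define \<epsilon> where "\<epsilon> y = fst (snd (P y))" for y
  define N where "N y = snd (snd (P y))" for y
  have H: "\<And>y. y\<in>C \<Longrightarrow> bounded_linear (l y) \<and> \<epsilon> y > 0 \<and> (\<forall>n\<ge>N y. n\<in>I \<longrightarrow> \<epsilon> y \<le> \<bar>l y (w n) - l y y\<bar>)"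
    using HP unfolding l_def \<epsilon>_def N_def by (rule bspec)
  define U where "U y = {x. l y x \<in> ball (l y y) (\<epsilon> y)}" for y
  have op: "openin weak_topology (U y)" if "y \<in> C" for y
    unfolding U_def using H[OF that] by (intro weak_open) auto
  have cov: "C \<subseteq> \<Union>(U ` C)"
  proof
    fix y assume y: "y \<in> C"
    then have "y \<in> U y" using H[of y] unfolding U_def by simp
    then show "y \<in> \<Union>(U ` C)" using y by blast
  qed
  from wc have "compactin weak_topology C" unfolding weakly_compact_def .
  then have cpt: "\<And>\<U>. (\<forall>V\<in>\<U>. openin weak_topology V) \<Longrightarrow> C \<subseteq> \<Union>\<U> \<Longrightarrow> (\<exists>\<F>. finite \<F> \<and> \<F> \<subseteq> \<U> \<and> C \<subseteq> \<Union>\<F>)"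
    unfolding compactin_def by blast
  have "\<forall>V\<in>U ` C. openin weak_topology V" using op by blast
  from cpt[OF this cov] obtain F where F: "finite F" "F \<subseteq> U ` C" "C \<subseteq> \<Union>F" by blast
  then obtain C' where C': "C' \<subseteq> C" "finite C'" "F = U ` C'" by (meson finite_subset_image)
  obtain n where n: "n \<ge> (\<Sum>y\<in>C'. N y)" "n \<in> I" using I infinite_nat_iff_unbounded_le by blast
  have "w n \<in> \<Union>F" using w F by blast
  then obtain y where y: "y \<in> C'" "w n \<in> U y" using C' by blast
  have "N y \<le> (\<Sum>y\<in>C'. N y)" using C' y by (intro member_le_sum) auto
  then have "\<epsilon> y \<le> \<bar>l y (w n) - l y y\<bar>" using H[of y] y C' n by auto
  moreover have "\<bar>l y (w n) - l y y\<bar> < \<epsilon> y" using y unfolding U_def by (simp add: dist_real_def abs_minus_commute)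
  ultimately show False by linarith
qed

lemma wc_bounded:
  fixes C :: "'a::real_normed_vector set"
  and l :: "'a \<Rightarrow> real"
  assumes wc: "weakly_compact C" and l: "bounded_linear l"
  shows "\<exists>B. \<forall>x\<in>C. \<bar>l x\<bar> \<le> B"
proof -
  define U where "U m = {x. l x \<in> ball 0 (real m)}" for m :: nat
  have op: "\<forall>V\<in>range U. openin weak_topology V"
  proof
    fix V assume "V \<in> range U"
    then obtain m where "V = U m" by blast
    then show "openin weak_topology V" unfolding U_def using weak_open[OF l, of "ball 0 (real m)"] by simp
  qed
  have cov: "C \<subseteq> \<Union>(range U)"
  proof
    fix x assume "x \<in> C"
    have "\<bar>l x\<bar> < real (nat \<lceil>\<bar>l x\<bar>\<rceil> + 1)" by linarith
    then have "x \<in> U (nat \<lceil>\<bar>l x\<bar>\<rceil> + 1)" unfolding U_def by simp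
    then show "x \<in> \<Union>(range U)" by blast
  qed
  from wc have "compactin weak_topology C" unfolding weakly_compact_def .
  then have cpt: "\<And>\<U>. (\<forall>V\<in>\<U>. openin weak_topology V) \<Longrightarrow> C \<subseteq> \<Union>\<U> \<Longrightarrow> (\<exists>\<F>. finite \<F> \<and> \<F> \<subseteq> \<U> \<and> C \<subseteq> \<Union>\<F>)"
    unfolding compactin_def by blast
  from cpt[OF op cov] obtain F where F: "finite F" "F \<subseteq> range U" "C \<subseteq> \<Union>F" by blast
  from finite_subset_image[OF F(1) F(2)] obtain M where M: "finite M" "F = U ` M" by blast
  have "\<bar>l x\<bar> \<le> real (\<Sum>M)" if "x \<in> C" for x
  proof -
    have "x \<in> \<Union>F" using F(3) that by (rule subsetD)
    then obtain m where m: "m \<in> M" "x \<in> U m" unfolding M(2) by blast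
    have "m \<le> \<Sum>M" using member_le_sum[of m M "\<lambda>x. x"] M(1) m(1) by simp
    moreover have "\<bar>l x\<bar> < real m" using m(2) unfolding U_def by simp
    ultimately show ?thesis by linarith
  qed
  then show ?thesis by blast
qed

lemma cluster_lim:
  fixes w :: "nat \<Rightarrow> 'a" and I :: "nat set"
  assumes lim: "(\<lambda>n. h (w n)) \<longlonglongrightarrow> L"
    and cl: "\<And>\<epsilon> N. \<epsilon> > 0 \<Longrightarrow> \<exists>n\<ge>N. n\<in>I \<and> \<bar>h (w n) - h y\<bar> < \<epsilon>"
  shows "h y = (L::real)"
proof (rule ccontr)
  assume ne: "h y \<noteq> L"
  define e where "e = \<bar>h y - L\<bar> / 2"
  have e: "e > 0" using ne e_def by simp
  obtain N where N: "\<forall>n\<ge>N. \<bar>h (w n) - L\<bar> < e" using lim e unfolding LIMSEQ_iff by auto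
  obtain n where "n \<ge> N" "\<bar>h (w n) - h y\<bar> < e" using cl[OF e] by blast
  with N have "\<bar>h y - L\<bar> < 2 * e" by force
  then show False using e_def by simp
qed

definition QQ :: "(nat \<Rightarrow> 'a::real_normed_vector) \<Rightarrow> 'a set" where
  "QQ v = (\<lambda>rs::rat list. \<Sum>i<length rs. real_of_rat (rs!i) *\<^sub>R v i) ` UNIV"

lemma QQ_iff: "x \<in> QQ v \<longleftrightarrow> (\<exists>m (r::nat\<Rightarrow>rat). x = (\<Sum>i<m. real_of_rat (r i) *\<^sub>R v i))"
proof
  assume "x \<in> QQ v"
  then obtain rs where "x = (\<Sum>i<length rs. real_of_rat (rs!i) *\<^sub>R v i)" unfolding QQ_def by blast
  then show "\<exists>m (r::nat\<Rightarrow>rat). x = (\<Sum>i<m. real_of_rat (r i) *\<^sub>R v i)"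
    by (intro exI[of _ "length rs"] exI[of _ "\<lambda>i. rs!i"])
next
  assume "\<exists>m (r::nat\<Rightarrow>rat). x = (\<Sum>i<m. real_of_rat (r i) *\<^sub>R v i)"
  then obtain m and r :: "nat \<Rightarrow> rat" where x: "x = (\<Sum>i<m. real_of_rat (r i) *\<^sub>R v i)" by blast
  have "x = (\<Sum>i<length (map r [0..<m]). real_of_rat (map r [0..<m] ! i) *\<^sub>R v i)"
    unfolding x by (intro sum.cong) auto
  then show "x \<in> QQ v" unfolding QQ_def by (intro image_eqI[where x="map r [0..<m]"]) auto
qed

lemma QQ_pad:
  fixes f :: "nat \<Rightarrow> 'a::comm_monoid_add"
  assumes "m \<le> m'"
  shows "(\<Sum>i<m. f i) = (\<Sum>i<m'. if i < m then f i else 0)"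
proof -
  have "{i \<in> {..<m'}. i < m} = {..<m}" using assms by auto
  then show ?thesis using sum.inter_filter[of "{..<m'}" f "\<lambda>i. i<m"] by simp
qed

lemma QQ_0: "0 \<in> QQ v"
  unfolding QQ_iff by (intro exI[of _ 0]) simp

lemma QQ_v: "v j \<in> QQ v"
proof -
  have "(\<lambda>i. real_of_rat (if i = j then 1 else 0) *\<^sub>R v i) = (\<lambda>i. if i = j then v i else 0)"
    by auto
  then have "(\<Sum>i<Suc j. real_of_rat (if i = j then 1 else 0) *\<^sub>R v i) = v j"
    by simp
  then show ?thesis unfolding QQ_iff by (intro exI[of _ "Suc j"] exI[of _ "\<lambda>i. if i = j then 1 else 0"]) simp
qed

lemma QQ_add:
  assumes "x \<in> QQ v" "y \<in> QQ v"
  shows "x + y \<in> QQ v"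
proof -
  obtain m1 and r1 :: "nat\<Rightarrow>rat" where x: "x = (\<Sum>i<m1. real_of_rat (r1 i) *\<^sub>R v i)"
    using assms(1) unfolding QQ_iff by blast
  obtain m2 and r2 :: "nat\<Rightarrow>rat" where y: "y = (\<Sum>i<m2. real_of_rat (r2 i) *\<^sub>R v i)"
    using assms(2) unfolding QQ_iff by blast
  define m where "m = m1 + m2"
  define r where "r i = (if i < m1 then r1 i else 0) + (if i < m2 then r2 i else 0)" for i
  have x': "x = (\<Sum>i<m. if i < m1 then real_of_rat (r1 i) *\<^sub>R v i else 0)"
    unfolding x m_def by (rule QQ_pad) simp
  have y': "y = (\<Sum>i<m. if i < m2 then real_of_rat (r2 i) *\<^sub>R v i else 0)"
    unfolding y m_def by (rule QQ_pad) simp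
  have "(\<Sum>i<m. real_of_rat (r i) *\<^sub>R v i) =
        (\<Sum>i<m. (if i < m1 then real_of_rat (r1 i) *\<^sub>R v i else 0) + (if i < m2 then real_of_rat (r2 i) *\<^sub>R v i else 0))"
    unfolding r_def by (intro sum.cong) (auto simp: of_rat_add scaleR_add_left)
  also have "\<dots> = x + y" unfolding x' y' by (rule sum.distrib)
  finally show ?thesis unfolding QQ_iff by (intro exI[of _ m] exI[of _ r]) simp
qed

lemma QQ_scale:
  assumes "x \<in> QQ v"
  shows "real_of_rat q *\<^sub>R x \<in> QQ v"
proof -
  obtain m and r :: "nat\<Rightarrow>rat" where x: "x = (\<Sum>i<m. real_of_rat (r i) *\<^sub>R v i)"
    using assms unfolding QQ_iff by blast
  have "real_of_rat q *\<^sub>R x = (\<Sum>i<m. real_of_rat (q * r i) *\<^sub>R v i)"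
    unfolding x by (simp add: scaleR_sum_right of_rat_mult)
  then show ?thesis unfolding QQ_iff by (intro exI[of _ m] exI[of _ "\<lambda>i. q * r i"])
qed

lemma QQ_countable: "countable (QQ v)"
  unfolding QQ_def by simp

lemma closure_QQ_subspace: "subspace (closure (QQ v))"
proof (rule subspaceI)
  show "0 \<in> closure (QQ v)" using QQ_0 closure_subset by blast
next
  fix x y assume "x \<in> closure (QQ v)" "y \<in> closure (QQ v)"
  then obtain a b where a: "\<forall>n. a n \<in> QQ v" "a \<longlonglongrightarrow> x" and b: "\<forall>n. b n \<in> QQ v" "b \<longlonglongrightarrow> y"
    unfolding closure_sequential by blast
  have "\<forall>n. a n + b n \<in> QQ v" using a b QQ_add by blast
  moreover have "(\<lambda>n. a n + b n) \<longlonglongrightarrow> x + y" using a b by (intro tendsto_add) auto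
  ultimately show "x + y \<in> closure (QQ v)" unfolding closure_sequential
    by (intro exI[where x="\<lambda>n. a n + b n"] conjI)
next
  fix c :: real and x assume "x \<in> closure (QQ v)"
  then obtain a where a: "\<forall>n. a n \<in> QQ v" "a \<longlonglongrightarrow> x"
    unfolding closure_sequential by blast
  have "c \<in> closure \<rat>" using Rats_closure_real by simp
  then obtain r where r: "\<forall>n. r n \<in> \<rat>" "r \<longlonglongrightarrow> c"
    unfolding closure_sequential by blast
  have "\<forall>n. \<exists>q. r n = real_of_rat q" using r(1) by (metis Rats_cases)
  then obtain q where q: "\<forall>n. r n = real_of_rat (q n)" by metis
  have "\<forall>n. r n *\<^sub>R a n \<in> QQ v" using a(1) q QQ_scale by metis
  moreover have "(\<lambda>n. r n *\<^sub>R a n) \<longlonglongrightarrow> c *\<^sub>R x" using a r by (intro tendsto_scaleR) auto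
  ultimately show "c *\<^sub>R x \<in> closure (QQ v)" unfolding closure_sequential
    by (intro exI[where x="\<lambda>n. r n *\<^sub>R a n"] conjI)
qed

lemma QQ_vanish:
  fixes l :: "'a::real_normed_vector \<Rightarrow> real"
  assumes l: "bounded_linear l" and lv: "\<And>i. l (v i) = 0" and x: "x \<in> closure (QQ v)"
  shows "l x = 0"
proof -
  have lin: "linear l" using l by (rule bounded_linear.linear)
  have onQ: "l y = 0" if yQ: "y \<in> QQ v" for y
  proof -
    obtain m and r :: "nat\<Rightarrow>rat" where y: "y = (\<Sum>i<m. real_of_rat (r i) *\<^sub>R v i)"
      using yQ unfolding QQ_iff by blast
    have "l y = (\<Sum>i<m. l (real_of_rat (r i) *\<^sub>R v i))" unfolding y by (rule linear_sum[OF lin])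
    also have "\<dots> = (\<Sum>i<m. real_of_rat (r i) * l (v i))"
      by (intro sum.cong refl) (simp add: linear_scale[OF lin])
    also have "\<dots> = 0" using lv by simp
    finally show ?thesis .
  qed
  obtain a where a: "\<forall>n. a n \<in> QQ v" "a \<longlonglongrightarrow> x"
    using x unfolding closure_sequential by blast
  have "(\<lambda>n. l (a n)) \<longlonglongrightarrow> l x" using bounded_linear.tendsto[OF l a(2)] .
  moreover have "(\<lambda>n. l (a n)) = (\<lambda>n. 0)" using a(1) onQ by auto
  ultimately show ?thesis using LIMSEQ_unique tendsto_const by metis
qed

lemma main_lemma:
  fixes C :: "'a::real_normed_vector set" and v :: "nat \<Rightarrow> 'a"
  assumes wc: "weakly_compact C" and vC: "\<forall>n. v n \<in> C"
  shows "\<exists>s x. strict_mono s \<and> weakly_tendsto (v \<circ> s) x"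
proof -
  define Q where "Q = QQ v"
  have Qc: "countable Q" unfolding Q_def by (rule QQ_countable)
  have Qne: "Q \<noteq> {}" unfolding Q_def using QQ_0 by blast
  define q where "q k = from_nat_into Q k" for k
  have "\<forall>k. \<exists>gk::'a\<Rightarrow>real. bounded_linear gk \<and> gk (q k) = norm (q k) \<and> (\<forall>x. \<bar>gk x\<bar> \<le> norm x)"
    by (intro allI norming_functional)
  then have "\<exists>g. \<forall>k. bounded_linear (g k) \<and> g k (q k) = norm (q k) \<and> (\<forall>x. \<bar>g k x\<bar> \<le> norm x)"
    by (rule choice)
  then obtain g :: "nat \<Rightarrow> 'a \<Rightarrow> real" where
    g: "\<forall>k. bounded_linear (g k) \<and> g k (q k) = norm (q k) \<and> (\<forall>x. \<bar>g k x\<bar> \<le> norm x)"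
    by (elim exE)
  have gbl: "bounded_linear (g k)" for k using g by blast
  have gq: "g k (q k) = norm (q k)" for k using g by blast
  have gn: "\<bar>g k x\<bar> \<le> norm x" for k x using g by blast
  interpret D: subseqs "\<lambda>k r. convergent (\<lambda>n. g k (v (r n)))"
  proof
    fix k and s :: "nat \<Rightarrow> nat" assume s: "strict_mono s"
    obtain B where B: "\<forall>x\<in>C. \<bar>g k x\<bar> \<le> B" using wc_bounded[OF wc gbl[of k]] by blast
    have bs: "Bseq (\<lambda>n. g k (v (s n)))" using B vC by (intro BseqI'[where K=B]) auto
    obtain f :: "nat \<Rightarrow> nat" where f: "strict_mono f" "monoseq (\<lambda>n. g k (v (s (f n))))"
      using seq_monosub[of "\<lambda>n. g k (v (s n))"] by blast
    have "Bseq (\<lambda>n. g k (v (s (f n))))" using Bseq_subseq[OF bs, of f] by simp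
    then have "convergent (\<lambda>n. g k (v (s (f n))))" using Bseq_monoseq_convergent f(2) by blast
    then show "\<exists>r'. strict_mono r' \<and> convergent (\<lambda>n. g k (v ((s \<circ> r') n)))"
      using f(1) by (intro exI[of _ f]) (simp add: o_def)
  qed
  define \<sigma> where "\<sigma> = D.diagseq"
  have \<sigma>: "strict_mono \<sigma>" using D.subseq_diagseq \<sigma>_def by simp
  have stable: "convergent (\<lambda>n. g k (v ((s \<circ> r) n)))"
    if "strict_mono r" "convergent (\<lambda>n. g k (v (s n)))" for r s k
    using convergent_subseq_convergent[OF that(2) that(1)] by (simp add: o_def)
  have conv: "convergent (\<lambda>n. g k (v (\<sigma> n)))" for k
  proof -
    have "convergent (\<lambda>n. g k (v ((D.diagseq \<circ> (+) (Suc k)) n)))"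
      by (rule D.diagseq_holds) (rule stable)
    then obtain L where "(\<lambda>n. g k (v (D.diagseq (Suc k + n)))) \<longlonglongrightarrow> L"
      by (auto simp: convergent_def o_def)
    then have "(\<lambda>n. (\<lambda>m. g k (v (D.diagseq m))) (n + Suc k)) \<longlonglongrightarrow> L" by (simp add: add.commute)
    then have "(\<lambda>m. g k (v (D.diagseq m))) \<longlonglongrightarrow> L" by (rule LIMSEQ_offset)
    then show ?thesis unfolding \<sigma>_def convergent_def by blast
  qed
  define w where "w = v \<circ> \<sigma>"
  have wC: "\<And>n. w n \<in> C" using vC w_def by simp
  obtain x where xC: "x \<in> C" and
    xcl: "\<forall>(l::'a\<Rightarrow>real) \<epsilon> N. bounded_linear l \<longrightarrow> \<epsilon> > 0 \<longrightarrow> (\<exists>n\<ge>N. n\<in>UNIV \<and> \<bar>l (w n) - l x\<bar> < \<epsilon>)"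
    using wc_cluster[where w=w, OF wc wC infinite_UNIV_nat] by blast
  have lim_x: "h x = L" if h: "bounded_linear h" and L: "(\<lambda>n. h (w n)) \<longlonglongrightarrow> L" for h :: "'a \<Rightarrow> real" and L
  proof (rule cluster_lim[where h=h and w=w and I=UNIV, OF L])
    fix \<epsilon> :: real and N assume "\<epsilon> > 0"
    show "\<exists>n\<ge>N. n\<in>UNIV \<and> \<bar>h (w n) - h x\<bar> < \<epsilon>" using xcl[rule_format, of h \<epsilon> N, OF h \<open>\<epsilon> > 0\<close>] .
  qed
  have "weakly_tendsto w x"
    unfolding weakly_tendsto_def
  proof (intro allI impI)
    fix l :: "'a \<Rightarrow> real" assume l: "bounded_linear l"
    show "(\<lambda>n. l (w n)) \<longlonglongrightarrow> l x"
    proof (rule ccontr)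
      assume nl: "\<not> ?thesis"
      from nl have "\<exists>r>0. \<forall>no. \<exists>n\<ge>no. \<not> norm (l (w n) - l x) < r" unfolding LIMSEQ_iff by blast
      then obtain \<epsilon> where \<epsilon>: "\<epsilon> > 0" "\<forall>no. \<exists>n\<ge>no. \<not> norm (l (w n) - l x) < \<epsilon>" by blast
      define I where "I = {n. \<epsilon> \<le> \<bar>l (w n) - l x\<bar>}"
      have infI: "infinite I" unfolding infinite_nat_iff_unbounded_le I_def using \<epsilon>(2) by (auto simp: not_less)
      obtain y where yC: "y \<in> C" and
        ycl: "\<forall>(l'::'a\<Rightarrow>real) \<epsilon>' N. bounded_linear l' \<longrightarrow> \<epsilon>' > 0 \<longrightarrow> (\<exists>n\<ge>N. n\<in>I \<and> \<bar>l' (w n) - l' y\<bar> < \<epsilon>')"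
        using wc_cluster[where w=w and I=I, OF wc wC infI] by blast
      have lim_y: "h y = L" if h: "bounded_linear h" and L: "(\<lambda>n. h (w n)) \<longlonglongrightarrow> L" for h :: "'a \<Rightarrow> real" and L
      proof (rule cluster_lim[where h=h and w=w and I=I, OF L])
        fix \<epsilon> :: real and N assume "\<epsilon> > 0"
        show "\<exists>n\<ge>N. n\<in>I \<and> \<bar>h (w n) - h y\<bar> < \<epsilon>" using ycl[rule_format, of h \<epsilon> N, OF h \<open>\<epsilon> > 0\<close>] .
      qed
      have lxy: "l x \<noteq> l y"
      proof
        assume eq: "l x = l y"
        have "\<exists>n\<ge>0. n\<in>I \<and> \<bar>l (w n) - l y\<bar> < \<epsilon>" using ycl[rule_format, of l \<epsilon> 0, OF l \<epsilon>(1)] .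
        then obtain n where "n \<in> I" "\<bar>l (w n) - l y\<bar> < \<epsilon>" by blast
        then show False using I_def eq by simp
      qed
      have gxy: "g k x = g k y" for k
      proof -
        obtain L where L: "(\<lambda>n. g k (w n)) \<longlonglongrightarrow> L" using conv[of k] unfolding convergent_def w_def by (auto simp: o_def)
        show ?thesis using lim_x[OF gbl L] lim_y[OF gbl L] by simp
      qed
      have ann: "h x = h y" if h: "bounded_linear h" and hv: "\<forall>i. h (v i) = 0" for h :: "'a \<Rightarrow> real"
      proof -
        have "(\<lambda>n. h (w n)) = (\<lambda>n. 0)" using hv w_def by auto
        then have L: "(\<lambda>n. h (w n)) \<longlonglongrightarrow> 0" by simp
        show ?thesis using lim_x[OF h L] lim_y[OF h L] by simp
      qed
      define z where "z = x - y"
      have lz: "l z = l x - l y" unfolding z_def by (rule linear_diff[OF bounded_linear.linear[OF l]])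
      then have zne: "z \<noteq> 0" using lxy linear_0[OF bounded_linear.linear[OF l]] by auto
      consider "z \<notin> closure Q" | "z \<in> closure Q" by blast
      then show False
      proof cases
        case 1
        obtain h :: "'a \<Rightarrow> real" where h: "bounded_linear h" "\<forall>y\<in>closure Q. h y = 0" "h z \<noteq> 0"
          using separating_functional[OF closure_QQ_subspace closed_closure 1[unfolded Q_def]] Q_def by blast
        have "h (v i) = 0" for i using h(2) QQ_v[of v i] closure_subset[of Q] unfolding Q_def by blast
        then have "h x = h y" using ann[OF h(1)] by blast
        moreover have "h z = h x - h y" unfolding z_def by (rule linear_diff[OF bounded_linear.linear[OF h(1)]])
        ultimately show False using h(3) by simp
      next
        case 2
        define e where "e = norm z / 3"
        have e: "e > 0" using zne unfolding e_def by simp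
        obtain p where p: "p \<in> Q" "dist p z < e" using 2 e unfolding closure_approachable by blast
        obtain k where k: "from_nat_into Q k = p" using from_nat_into_surj[OF Qc p(1)] by blast
        have qk: "q k = p" using k q_def by simp
        have gz: "g k z = 0" unfolding z_def using gxy[of k] linear_diff[OF bounded_linear.linear[OF gbl[of k]]] by simp
        have "norm p = g k p" using gq[of k] qk by simp
        also have "g k p = g k (p - z)" using gz linear_diff[OF bounded_linear.linear[OF gbl[of k]]] by simp
        also have "\<dots> \<le> norm (p - z)" using gn[of k "p - z"] by simp
        finally have np: "norm p < e" using p(2) by (simp add: dist_norm)
        have "norm z \<le> norm p + norm (z - p)" using norm_triangle_ineq[of p "z - p"] by simp
        moreover have "norm (z - p) < e" using p(2) by (simp add: dist_norm norm_minus_commute)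
        moreover have "norm z > 0" using zne by simp
        ultimately show False using np e_def by linarith
      qed
    qed
  qed
  then show ?thesis using \<sigma> unfolding w_def by (intro exI[of _ \<sigma>] exI[of _ x] conjI)
qed

theorem corollary2p4:
  fixes C :: "'a::banach set"
  assumes "weakly_compact C"
  shows "weak_SACP C CB F_cmc"
  unfolding weak_SACP_def
proof (intro ballI allI impI)
  fix F f and v :: "nat \<Rightarrow> 'a"
  assume vC: "\<forall>n. v n \<in> C"
  show "\<exists>s x. strict_mono s \<and> weakly_tendsto (v \<circ> s) x" using main_lemma[OF assms vC] .
qed

end
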